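(* Let $r>0$ and $s$ be real numbers. Let $e_0,e_1,e_2,\dots$ be independent and identically distributed real random variables with cumulative distribution function $F$ having probability density function $f$ with respect to Lebesgue measure. Let $X_0$ be a real random variable such that $(X_0,e_0)$ is independent of $(e_1,e_2,\dots)$, and define the ARMA(1,1) process $X_i - rX_{i-1} = e_i + s e_{i-1}$ for $i\ge 1$. Fix $x\in\mathbb{R}$, put $M_0=-\infty$ and $M_n=\max_{1\le i\le n}X_i$ for $n\ge1$, and for $\mathbf{y}=(y_0,y_1)\in\mathbb{R}^2$ and $n\ge 0$ define $$G_n(\mathbf{y}) = P(M_n\le x,\ X_n\le y_0,\ e_n\le y_1),$$ so that $G_0(\mathbf{y})=P(X_0\le y_0,\ e_0\le y_1)$. Define the linear integral operator $\mathcal{K}$ (depending on $x$) acting on functions $h$ of $\mathbf{z}=(z_0,z_1)\in\mathbb{R}^2$ by $$\mathcal{K}h(\mathbf{y}) = r\int\int_{a_{\mathbf{y}\mathbf{z}}}^{\infty} dz_0\, f(y_{0x}-rz_0-sz_1)\, h(z_0,dz_1),$$ where $y_{0x}=\min(y_0,x)$, $a_{\mathbf{y}\mathbf{z}}=(y_{0x}-sz_1-y_1)/r$, and $h(z_0,dz_1)$ denotes Lebesgue--Stieltjes integration with respect to the second argument $z_1$ of $h$. Then for every $n\ge 1$ and every $\mathbf{y}\in\mathbb{R}^2$, $$G_n(\mathbf{y}) = \mathcal{K}G_{n-1}(\mathbf{y}).$$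
   Context: All notation is introduced in the claim. The dependence of $G_n$ and $\mathcal{K}$ on the fixed level $x$ is suppressed. *)

theory Defs
  imports "HOL-Probability.Probability"
begin

definition run_max :: "(nat \<Rightarrow> 'a \<Rightarrow> real) \<Rightarrow> nat \<Rightarrow> 'a \<Rightarrow> ereal" where
  "run_max X n \<omega> = (if n = 0 then -\<infinity> else Max ((\<lambda>i. ereal (X i \<omega>)) ` {1..n}))"

definition Gfun :: "'a measure \<Rightarrow> (nat \<Rightarrow> 'a \<Rightarrow> real) \<Rightarrow> (nat \<Rightarrow> 'a \<Rightarrow> real) \<Rightarrow> real
    \<Rightarrow> nat \<Rightarrow> real \<Rightarrow> real \<Rightarrow> real" where
  "Gfun M X e x n y0 y1 =
     measure M {\<omega> \<in> space M. run_max X n \<omega> \<le> ereal x \<and> X n \<omega> \<le> y0 \<and> e n \<omega> \<le> y1}"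

text \<open>The integral operator K: the inner integral is the Lebesgue--Stieltjes integral
  in z1 with respect to the function h(z0, .), the outer one is Lebesgue integration in z0
  over [a_{yz}, infinity).\<close>
definition Kop :: "real \<Rightarrow> real \<Rightarrow> (real \<Rightarrow> real) \<Rightarrow> real \<Rightarrow> (real \<Rightarrow> real \<Rightarrow> real)
    \<Rightarrow> real \<Rightarrow> real \<Rightarrow> real" where
  "Kop r s f x h y0 y1 =
     r * (LINT z0|lborel. LINT z1|interval_measure (\<lambda>t. h z0 t).
            (if (min y0 x - s * z1 - y1) / r \<le> z0 then f (min y0 x - r * z0 - s * z1) else 0))"

end

theory Submission
  imports Defs
begin

lemma interval_measure_cdf:
  assumes "finite_borel_measure N"
  shows "interval_measure (cdf N) = N"
proof -
  interpret finite_borel_measure N by fact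
  show ?thesis
  proof (rule measure_eqI_generator_eq[where \<Omega>=UNIV and E="range (\<lambda>(a, b). {a<..b::real})"
        and A="\<lambda>i. {- real (i::nat)<..real i}"])
    fix X assume "X \<in> range (\<lambda>(a, b). {a<..b::real})"
    then obtain a b where Xeq: "X = {a<..b}" by auto
    then show "emeasure (interval_measure (cdf N)) X = emeasure N X"
      by (cases "a \<le> b")
         (simp_all add: emeasure_Ioc emeasure_interval_measure_Ioc cdf_nondecreasing cdf_is_right_cont)
  next
    show "(\<Union>i. {- real (i::nat)<..real i}) = UNIV"
      by (rule UN_Ioc_eq_UNIV)
  next
    fix i :: nat show "emeasure (interval_measure (cdf N)) {- real i<..real i} \<noteq> \<infinity>"
      by (simp add: emeasure_interval_measure_Ioc cdf_nondecreasing cdf_is_right_cont)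
  qed (auto simp: M_is_borel borel_sigma_sets_Ioc Int_stable_def)
qed

lemma run_max_le:
  "run_max X m \<omega> \<le> ereal x \<longleftrightarrow> (\<forall>i\<in>{1..m}. X i \<omega> \<le> x)"
  by (cases "m = 0") (auto simp: run_max_def)

lemma affine_sub:
  fixes f :: "real \<Rightarrow> real" and r b y1 u :: real
  assumes fm[measurable]: "f \<in> borel_measurable borel" and r: "r > 0"
  shows "(\<integral>\<^sup>+ t. ennreal (f t) * indicator {t. t \<le> y1 \<and> t \<le> b - r * u} t \<partial>lborel)
       = ennreal r * (\<integral>\<^sup>+ z. ennreal (if (b - y1) / r \<le> z then f (b - r * z) else 0) * indicator {u..} z \<partial>lborel)"
proof -
  have "(\<integral>\<^sup>+ t. ennreal (f t) * indicator {t. t \<le> y1 \<and> t \<le> b - r * u} t \<partial>lborel)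
     = \<bar>- r\<bar> * (\<integral>\<^sup>+ z. ennreal (f (b + (- r) * z)) * indicator {t. t \<le> y1 \<and> t \<le> b - r * u} (b + (- r) * z) \<partial>lborel)"
    using r by (intro nn_integral_real_affine) auto
  also have "(\<lambda>z. ennreal (f (b + (- r) * z)) * indicator {t. t \<le> y1 \<and> t \<le> b - r * u} (b + (- r) * z))
      = (\<lambda>z. ennreal (if (b - y1) / r \<le> z then f (b - r * z) else 0) * indicator {u..} z)"
  proof
    fix z
    have "b + (- r) * z \<le> y1 \<longleftrightarrow> (b - y1) / r \<le> z" using r by (simp add: field_simps)
    moreover have "b + (- r) * z \<le> b - r * u \<longleftrightarrow> u \<le> z" using r by simp
    ultimately show "ennreal (f (b + (- r) * z)) * indicator {t. t \<le> y1 \<and> t \<le> b - r * u} (b + (- r) * z)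
      = ennreal (if (b - y1) / r \<le> z then f (b - r * z) else 0) * indicator {u..} z"
      by (auto simp: indicator_def)
  qed
  finally show ?thesis using r by simp
qed

lemma (in prob_space) indep_nn_integral:
  fixes f :: "real \<Rightarrow> real" and emb :: "real \<Rightarrow> 'b"
  assumes ind: "indep_var N V N (\<lambda>\<omega>. emb (E \<omega>))"
    and embm[measurable]: "emb \<in> measurable borel N"
    and dist: "distributed M lborel E (\<lambda>t. ennreal (f t))"
    and g[measurable]: "g \<in> borel_measurable (N \<Otimes>\<^sub>M N)"
  shows "(\<integral>\<^sup>+\<omega>. g (V \<omega>, emb (E \<omega>)) \<partial>M) = (\<integral>\<^sup>+\<omega>. (\<integral>\<^sup>+t. ennreal (f t) * g (V \<omega>, emb t) \<partial>lborel) \<partial>M)"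
proof -
  have Em[measurable]: "E \<in> measurable M borel"
    using dist by (auto simp: distributed_def cong: measurable_cong_sets)
  have rv[measurable]: "V \<in> measurable M N" "(\<lambda>\<omega>. emb (E \<omega>)) \<in> measurable M N"
    using indep_var_rv1[OF ind] indep_var_rv2[OF ind] by auto
  have eq: "distr M N V \<Otimes>\<^sub>M distr M N (\<lambda>\<omega>. emb (E \<omega>)) = distr M (N \<Otimes>\<^sub>M N) (\<lambda>x. (V x, emb (E x)))"
    using ind by (simp add: indep_var_distribution_eq)
  interpret X: prob_space "distr M N V" by (rule prob_space_distr) simp
  interpret Y: prob_space "distr M N (\<lambda>\<omega>. emb (E \<omega>))" by (rule prob_space_distr) simp
  interpret XY: pair_prob_space "distr M N V" "distr M N (\<lambda>\<omega>. emb (E \<omega>))" ..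
  have fm[measurable]: "(\<lambda>t. ennreal (f t)) \<in> borel_measurable borel"
    using dist by (simp add: distributed_def)
  have dE: "distr M borel E = density lborel (\<lambda>t. ennreal (f t))"
  proof -
    have "distr M borel E = distr M lborel E" by (rule distr_cong) auto
    then show ?thesis using dist by (simp add: distributed_def)
  qed
  have "(\<integral>\<^sup>+\<omega>. g (V \<omega>, emb (E \<omega>)) \<partial>M) = (\<integral>\<^sup>+p. g p \<partial>distr M (N \<Otimes>\<^sub>M N) (\<lambda>x. (V x, emb (E x))))"
    by (subst nn_integral_distr) auto
  also have "\<dots> = (\<integral>\<^sup>+p. g p \<partial>(distr M N V \<Otimes>\<^sub>M distr M N (\<lambda>\<omega>. emb (E \<omega>))))"
    by (simp add: eq)
  also have "\<dots> = (\<integral>\<^sup>+v. \<integral>\<^sup>+w. g (v, w) \<partial>distr M N (\<lambda>\<omega>. emb (E \<omega>)) \<partial>distr M N V)"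
    by (subst Y.nn_integral_fst) (auto cong: measurable_cong_sets)
  also have "\<dots> = (\<integral>\<^sup>+v. \<integral>\<^sup>+t. g (v, emb t) \<partial>distr M borel E \<partial>distr M N V)"
  proof (intro nn_integral_cong)
    fix v assume "v \<in> space (distr M N V)"
    then have [measurable]: "v \<in> space N" by simp
    have "distr M N (\<lambda>\<omega>. emb (E \<omega>)) = distr (distr M borel E) N emb"
      by (subst distr_distr) (auto simp: comp_def)
    then show "(\<integral>\<^sup>+w. g (v, w) \<partial>distr M N (\<lambda>\<omega>. emb (E \<omega>))) = (\<integral>\<^sup>+t. g (v, emb t) \<partial>distr M borel E)"
      by (simp add: nn_integral_distr)
  qed
  also have "\<dots> = (\<integral>\<^sup>+v. \<integral>\<^sup>+t. ennreal (f t) * g (v, emb t) \<partial>lborel \<partial>distr M N V)"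
    unfolding dE by (intro nn_integral_cong, subst nn_integral_density) auto
  also have "\<dots> = (\<integral>\<^sup>+\<omega>. (\<integral>\<^sup>+t. ennreal (f t) * g (V \<omega>, emb t) \<partial>lborel) \<partial>M)"
    by (subst nn_integral_distr) auto
  finally show ?thesis .
qed

lemma Dm_meas:
  fixes X :: "nat \<Rightarrow> 'a \<Rightarrow> real"
  assumes "\<And>i. i \<le> m \<Longrightarrow> X i \<in> borel_measurable K"
  shows "{\<omega>\<in>space K. \<forall>i\<in>{1..m}. X i \<omega> \<le> x} \<in> sets K"
proof (rule sets.sets_Collect_finite_All)
  fix i assume "i \<in> {1..m}"
  then have [measurable]: "X i \<in> borel_measurable K" using assms by auto
  show "{\<omega>\<in>space K. X i \<omega> \<le> x} \<in> sets K" by measurable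
qed simp

lemma X_meas:
  fixes X e :: "nat \<Rightarrow> 'a \<Rightarrow> real"
  assumes X0: "X 0 \<in> borel_measurable K" and em: "\<And>i. i \<le> m \<Longrightarrow> e i \<in> borel_measurable K"
    and rec: "\<And>i \<omega>. i \<ge> 1 \<Longrightarrow> \<omega> \<in> space K \<Longrightarrow> X i \<omega> - r * X (i - 1) \<omega> = e i \<omega> + s * e (i - 1) \<omega>"
    and i: "i \<le> m"
  shows "X i \<in> borel_measurable K"
  using i
proof (induction i)
  case 0 then show ?case using X0 by simp
next
  case (Suc i)
  have "(\<lambda>\<omega>. r * X i \<omega> + e (Suc i) \<omega> + s * e i \<omega>) \<in> borel_measurable K"
  proof -
    have [measurable]: "X i \<in> borel_measurable K" "e i \<in> borel_measurable K" "e (Suc i) \<in> borel_measurable K"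
      using Suc em[of i] em[of "Suc i"] by auto
    show ?thesis by measurable
  qed
  moreover have "X (Suc i) \<omega> = r * X i \<omega> + e (Suc i) \<omega> + s * e i \<omega>" if "\<omega> \<in> space K" for \<omega>
  proof -
    have "X (Suc i) \<omega> - r * X i \<omega> = e (Suc i) \<omega> + s * e i \<omega>" using rec[of "Suc i" \<omega>] that by simp
    then show ?thesis by linarith
  qed
  ultimately show ?case by (subst measurable_cong) auto
qed

lemma (in prob_space) indep_set_mono:
  assumes "indep_set A B" "A' \<subseteq> A" "B' \<subseteq> B"
  shows "indep_set A' B'"
proof -
  have i: "indep_sets (case_bool A B) UNIV" using assms(1) by (simp add: indep_set_def)
  show ?thesis unfolding indep_set_def
    by (rule indep_sets_mono_sets[OF i]) (use assms in \<open>auto split: bool.split\<close>)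
qed

lemma (in prob_space) indep_core:
  fixes X e :: "nat \<Rightarrow> 'a \<Rightarrow> real" and r s x :: real
  assumes ind_e: "indep_vars (\<lambda>_. borel) e UNIV"
    and X0[measurable]: "X 0 \<in> borel_measurable M"
    and indZW: "indep_set
           (sets (vimage_algebra (space M) (\<lambda>\<omega>. (X 0 \<omega>, e 0 \<omega>)) (borel \<Otimes>\<^sub>M borel)))
           (sets (vimage_algebra (space M) (\<lambda>\<omega>. restrict (\<lambda>i. e i \<omega>) {1..})
                   (PiM {1..} (\<lambda>_. borel))))"
    and rec: "\<And>i \<omega>. i \<ge> 1 \<Longrightarrow> \<omega> \<in> space M \<Longrightarrow>
           X i \<omega> - r * X (i - 1) \<omega> = e i \<omega> + s * e (i - 1) \<omega>"
  shows "indep_var (borel \<Otimes>\<^sub>M (borel \<Otimes>\<^sub>M borel))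
           (\<lambda>\<omega>. (X m \<omega>, e m \<omega>, indicator {\<omega>\<in>space M. \<forall>i\<in>{1..m}. X i \<omega> \<le> x} \<omega> :: real))
           (borel \<Otimes>\<^sub>M (borel \<Otimes>\<^sub>M borel)) (\<lambda>\<omega>. (e (Suc m) \<omega>, 0, 0))"
proof -
  define \<Omega> where "\<Omega> = space M"
  define Z where "Z = (\<lambda>\<omega>. (X 0 \<omega>, e 0 \<omega>))"
  define W where "W = (\<lambda>\<omega>. restrict (\<lambda>i. e i \<omega>) {1::nat..})"
  define Wm where "Wm = (\<lambda>\<omega>. restrict (\<lambda>i. e i \<omega>) {1..m})"
  define ZA where "ZA = {Z -` A \<inter> \<Omega> | A. A \<in> sets (borel \<Otimes>\<^sub>M borel)}"
  define Bm where "Bm = {Wm -` A \<inter> \<Omega> | A. A \<in> sets (PiM {1..m} (\<lambda>_. borel :: real measure))}"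
  define C where "C = {e (Suc m) -` A \<inter> \<Omega> | A. A \<in> sets (borel :: real measure)}"
  define P where "P = {a \<inter> b | a b. a \<in> ZA \<and> b \<in> Bm}"
  define SW where "SW = sets (vimage_algebra \<Omega> W (PiM {1..} (\<lambda>_. borel :: real measure)))"
  have em[measurable]: "\<And>i. e i \<in> borel_measurable M"
    using ind_e unfolding indep_vars_def2 by auto
  have Zm[measurable]: "Z \<in> measurable M (borel \<Otimes>\<^sub>M borel)" unfolding Z_def by measurable
  have Wmm[measurable]: "Wm \<in> measurable M (PiM {1..m} (\<lambda>_. borel))" unfolding Wm_def
    by (rule measurable_restrict) auto
  have SWI: "(\<lambda>\<omega>. h (W \<omega>)) -` A \<inter> \<Omega> \<in> SW"
    if h: "h \<in> measurable (PiM {1..} (\<lambda>_. borel)) K" and A: "A \<in> sets K" for h :: "(nat \<Rightarrow> real) \<Rightarrow> 'b" and K A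
  proof -
    have "W \<in> measurable (vimage_algebra \<Omega> W (PiM {1..} (\<lambda>_. borel))) (PiM {1..} (\<lambda>_. borel))"
      by (rule measurable_vimage_algebra1) (auto simp: W_def space_PiM)
    then have "(\<lambda>\<omega>. h (W \<omega>)) \<in> measurable (vimage_algebra \<Omega> W (PiM {1..} (\<lambda>_. borel))) K"
      by (rule measurable_compose[OF _ h])
    from measurable_sets[OF this A] show ?thesis unfolding SW_def by simp
  qed
  have ZAe: "a \<in> events" if "a \<in> ZA" for a
    using that unfolding ZA_def \<Omega>_def by auto
  have Bme: "b \<in> events" if "b \<in> Bm" for b
    using that unfolding Bm_def \<Omega>_def by (auto intro: measurable_sets[OF Wmm])
  have Ce: "c \<in> events" if "c \<in> C" for c
    using that unfolding C_def \<Omega>_def by auto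
  have ZA_SA: "a \<in> sets (vimage_algebra (space M) (\<lambda>\<omega>. (X 0 \<omega>, e 0 \<omega>)) (borel \<Otimes>\<^sub>M borel))"
    if "a \<in> ZA" for a
    using that unfolding ZA_def sets_vimage_algebra Z_def \<Omega>_def by (auto intro: sigma_sets.Basic)
  have WWm: "restrict (W \<omega>) {1..m} = Wm \<omega>" for \<omega>
    by (auto simp: W_def Wm_def restrict_def fun_eq_iff)
  have WWm': "restrict (W \<omega>) {Suc 0..m} = Wm \<omega>" for \<omega>
    by (auto simp: W_def Wm_def restrict_def fun_eq_iff)
  have WSm: "W \<omega> (Suc m) = e (Suc m) \<omega>" for \<omega>
    by (simp add: W_def)
  have Bm_SW: "b \<in> SW" if "b \<in> Bm" for b
  proof -
    from that obtain B where B: "B \<in> sets (PiM {1..m} (\<lambda>_. borel :: real measure))" "b = Wm -` B \<inter> \<Omega>"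
      unfolding Bm_def by auto
    have "(\<lambda>\<omega>. restrict (W \<omega>) {1..m}) -` B \<inter> \<Omega> \<in> SW"
      by (rule SWI[OF measurable_restrict_subset B(1)]) auto
    moreover have eqf: "(\<lambda>\<omega>. restrict (W \<omega>) {1..m}) = Wm" by (rule ext) (rule WWm)
    ultimately show ?thesis using B by metis
  qed
  have BC_SW: "b \<inter> c \<in> SW" if "b \<in> Bm" "c \<in> C" for b c
  proof -
    from that obtain B1 B2 where B: "B1 \<in> sets (PiM {1..m} (\<lambda>_. borel :: real measure))" "b = Wm -` B1 \<inter> \<Omega>"
      "B2 \<in> sets (borel :: real measure)" "c = e (Suc m) -` B2 \<inter> \<Omega>"
      unfolding Bm_def C_def by auto
    have hm: "(\<lambda>g. (restrict g {1..m}, g (Suc m))) \<in> measurable (PiM {1..} (\<lambda>_. borel :: real measure))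
        (PiM {1..m} (\<lambda>_. borel) \<Otimes>\<^sub>M borel)"
      by (intro measurable_Pair measurable_restrict_subset measurable_component_singleton) auto
    have "(\<lambda>\<omega>. (restrict (W \<omega>) {1..m}, W \<omega> (Suc m))) -` (B1 \<times> B2) \<inter> \<Omega> \<in> SW"
      by (rule SWI[OF hm]) (use B in auto)
    moreover have "(\<lambda>\<omega>. (restrict (W \<omega>) {1..m}, W \<omega> (Suc m))) -` (B1 \<times> B2) \<inter> \<Omega> = b \<inter> c"
      using B by (auto simp: WWm WWm' WSm)
    ultimately show ?thesis by simp
  qed
  have indBC: "prob (b \<inter> c) = prob b * prob c" if "b \<in> Bm" "c \<in> C" for b c
  proof -
    from that obtain B1 B2 where B: "B1 \<in> sets (PiM {1..m} (\<lambda>_. borel :: real measure))" "b = Wm -` B1 \<inter> \<Omega>"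
      "B2 \<in> sets (borel :: real measure)" "c = e (Suc m) -` B2 \<inter> \<Omega>"
      unfolding Bm_def C_def by auto
    have "indep_var (PiM {1..m} (\<lambda>_. borel)) (\<lambda>\<omega>. restrict (\<lambda>i. e i \<omega>) {1..m})
            (PiM {Suc m} (\<lambda>_. borel)) (\<lambda>\<omega>. restrict (\<lambda>i. e i \<omega>) {Suc m})"
      by (rule indep_var_restrict[OF ind_e]) auto
    then have iv: "indep_var (PiM {1..m} (\<lambda>_. borel)) Wm
            (PiM {Suc m} (\<lambda>_. borel)) (\<lambda>\<omega>. restrict (\<lambda>i. e i \<omega>) {Suc m})"
      by (simp add: Wm_def)
    have comp: "(\<lambda>g. g (Suc m)) \<in> measurable (PiM {Suc m} (\<lambda>_. borel :: real measure)) borel"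
      by (intro measurable_component_singleton) auto
    define B2' where "B2' = (\<lambda>g. g (Suc m)) -` B2 \<inter> space (PiM {Suc m} (\<lambda>_. borel :: real measure))"
    have B2': "B2' \<in> sets (PiM {Suc m} (\<lambda>_. borel :: real measure))"
      unfolding B2'_def by (rule measurable_sets[OF comp B(3)])
    have "prob ((\<lambda>x. (Wm x, restrict (\<lambda>i. e i x) {Suc m})) -` (B1 \<times> B2') \<inter> space M) =
      prob (Wm -` B1 \<inter> space M) * prob ((\<lambda>x. restrict (\<lambda>i. e i x) {Suc m}) -` B2' \<inter> space M)"
      by (rule indep_varD[OF iv B(1) B2'])
    moreover have "(\<lambda>x. (Wm x, restrict (\<lambda>i. e i x) {Suc m})) -` (B1 \<times> B2') \<inter> space M = b \<inter> c"
      using B by (auto simp: \<Omega>_def B2'_def space_PiM)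
    moreover have "(\<lambda>x. restrict (\<lambda>i. e i x) {Suc m}) -` B2' \<inter> space M = c"
      using B by (auto simp: \<Omega>_def B2'_def space_PiM)
    ultimately show ?thesis using B by (simp add: \<Omega>_def)
  qed
  have indAD: "prob (a \<inter> d) = prob a * prob d" if "a \<in> ZA" "d \<in> SW" for a d
    using indep_setD[OF indZW ZA_SA[OF that(1)]] that(2) unfolding SW_def W_def \<Omega>_def by simp
  have key: "prob (a \<inter> b \<inter> c) = prob (a \<inter> b) * prob c" if "a \<in> ZA" "b \<in> Bm" "c \<in> C" for a b c
  proof -
    have "prob (a \<inter> b \<inter> c) = prob (a \<inter> (b \<inter> c))" by (simp add: Int_assoc)
    also have "\<dots> = prob a * prob (b \<inter> c)" using indAD[OF that(1) BC_SW[OF that(2,3)]] .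
    also have "\<dots> = prob a * prob b * prob c" using indBC[OF that(2,3)] by simp
    also have "prob a * prob b = prob (a \<inter> b)" using indAD[OF that(1) Bm_SW[OF that(2)]] by simp
    finally show ?thesis .
  qed
  have indPC: "indep_set P C"
  proof (rule indep_setI)
    show "P \<subseteq> events" unfolding P_def using ZAe Bme by auto
    show "C \<subseteq> events" using Ce by auto
    fix p c assume "p \<in> P" "c \<in> C"
    then obtain a b where "a \<in> ZA" "b \<in> Bm" "p = a \<inter> b" unfolding P_def by auto
    then show "prob (p \<inter> c) = prob p * prob c" using key \<open>c \<in> C\<close> by simp
  qed
  have stP: "Int_stable P"
  proof (rule Int_stableI)
    fix p q assume "p \<in> P" "q \<in> P"
    then obtain a b a' b' where ab: "a \<in> ZA" "b \<in> Bm" "p = a \<inter> b" "a' \<in> ZA" "b' \<in> Bm" "q = a' \<inter> b'"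
      unfolding P_def by blast
    from ab obtain A A' where A: "A \<in> sets (borel \<Otimes>\<^sub>M borel)" "a = Z -` A \<inter> \<Omega>" "A' \<in> sets (borel \<Otimes>\<^sub>M borel)" "a' = Z -` A' \<inter> \<Omega>"
      unfolding ZA_def by auto
    from ab obtain B B' where B: "B \<in> sets (PiM {1..m} (\<lambda>_. borel :: real measure))" "b = Wm -` B \<inter> \<Omega>"
      "B' \<in> sets (PiM {1..m} (\<lambda>_. borel :: real measure))" "b' = Wm -` B' \<inter> \<Omega>"
      unfolding Bm_def by auto
    have "a \<inter> a' \<in> ZA" unfolding ZA_def using A by (intro CollectI exI[of _ "A \<inter> A'"]) auto
    moreover have "b \<inter> b' \<in> Bm" unfolding Bm_def using B by (intro CollectI exI[of _ "B \<inter> B'"]) auto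
    moreover have "p \<inter> q = (a \<inter> a') \<inter> (b \<inter> b')" using ab by auto
    ultimately show "p \<inter> q \<in> P" unfolding P_def by blast
  qed
  have stC: "Int_stable C"
  proof (rule Int_stableI)
    fix p q assume "p \<in> C" "q \<in> C"
    then obtain A A' where "A \<in> sets borel" "p = e (Suc m) -` A \<inter> \<Omega>" "A' \<in> sets borel" "q = e (Suc m) -` A' \<inter> \<Omega>"
      unfolding C_def by auto
    then show "p \<inter> q \<in> C" unfolding C_def by (intro CollectI exI[of _ "A \<inter> A'"]) auto
  qed
  have indPC': "indep_set (sigma_sets \<Omega> P) (sigma_sets \<Omega> C)"
  proof -
    have "indep_sets (case_bool P C) UNIV" using indPC by (simp add: indep_set_def)
    then have "indep_sets (\<lambda>i. sigma_sets (space M) (case_bool P C i)) UNIV"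
      by (rule indep_sets_sigma) (use stP stC in \<open>auto split: bool.split\<close>)
    moreover have "(\<lambda>i. sigma_sets (space M) (case_bool P C i)) = case_bool (sigma_sets \<Omega> P) (sigma_sets \<Omega> C)"
      by (auto simp: fun_eq_iff \<Omega>_def split: bool.split)
    ultimately show ?thesis by (simp add: indep_set_def)
  qed
  define MP where "MP = sigma \<Omega> P"
  have PsubO: "P \<subseteq> Pow \<Omega>" unfolding P_def \<Omega>_def using ZAe Bme sets.sets_into_space by blast
  have spMP: "space MP = \<Omega>" unfolding MP_def using PsubO by (rule space_measure_of)
  have setsMP: "sets MP = sigma_sets \<Omega> P" unfolding MP_def using PsubO by (rule sets_measure_of)
  have toMP: "h \<in> borel_measurable MP" if h: "\<And>B. B \<in> sets (borel :: real measure) \<Longrightarrow> h -` B \<inter> \<Omega> \<in> P" for h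
    by (rule measurableI) (auto simp: spMP setsMP intro: sigma_sets.Basic h)
  have U2: "(UNIV :: (real \<times> real) set) \<in> sets (borel \<Otimes>\<^sub>M borel)"
    using sets.top[of "borel \<Otimes>\<^sub>M borel :: (real \<times> real) measure"] by (simp add: space_pair_measure)
  have OZA: "\<Omega> \<in> ZA" unfolding ZA_def
    by (intro CollectI exI[of _ UNIV]) (auto simp: U2)
  have OBm: "\<Omega> \<in> Bm" unfolding Bm_def
    using measurable_space[OF Wmm] by (intro CollectI exI[of _ "space (PiM {1..m} (\<lambda>_. borel :: real measure))"]) (auto simp: \<Omega>_def)
  have X0MP: "X 0 \<in> borel_measurable MP"
  proof (rule toMP)
    fix B :: "real set" assume B: "B \<in> sets borel"
    have "X 0 -` B \<inter> \<Omega> = (Z -` (B \<times> UNIV) \<inter> \<Omega>) \<inter> \<Omega>" by (auto simp: Z_def)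
    moreover have "Z -` (B \<times> UNIV) \<inter> \<Omega> \<in> ZA" unfolding ZA_def using B
      by (intro CollectI exI[of _ "B \<times> UNIV"]) (auto intro!: pair_measureI)
    ultimately show "X 0 -` B \<inter> \<Omega> \<in> P" unfolding P_def using OBm by blast
  qed
  have e0MP: "e 0 \<in> borel_measurable MP"
  proof (rule toMP)
    fix B :: "real set" assume B: "B \<in> sets borel"
    have "e 0 -` B \<inter> \<Omega> = (Z -` (UNIV \<times> B) \<inter> \<Omega>) \<inter> \<Omega>" by (auto simp: Z_def)
    moreover have "Z -` (UNIV \<times> B) \<inter> \<Omega> \<in> ZA" unfolding ZA_def using B
      by (intro CollectI exI[of _ "UNIV \<times> B"]) (auto intro!: pair_measureI)
    ultimately show "e 0 -` B \<inter> \<Omega> \<in> P" unfolding P_def using OBm by blast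
  qed
  have eiMP: "e i \<in> borel_measurable MP" if i: "1 \<le> i" "i \<le> m" for i
  proof (rule toMP)
    fix B :: "real set" assume B: "B \<in> sets borel"
    have comp: "(\<lambda>g. g i) \<in> measurable (PiM {1..m} (\<lambda>_. borel :: real measure)) borel"
      using i by (intro measurable_component_singleton) auto
    have "e i -` B \<inter> \<Omega> = \<Omega> \<inter> (Wm -` ((\<lambda>g. g i) -` B \<inter> space (PiM {1..m} (\<lambda>_. borel :: real measure))) \<inter> \<Omega>)"
      using i measurable_space[OF Wmm] by (auto simp: Wm_def \<Omega>_def)
    moreover have "Wm -` ((\<lambda>g. g i) -` B \<inter> space (PiM {1..m} (\<lambda>_. borel :: real measure))) \<inter> \<Omega> \<in> Bm"
      unfolding Bm_def using measurable_sets[OF comp B] by blast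
    ultimately show "e i -` B \<inter> \<Omega> \<in> P" unfolding P_def using OZA by blast
  qed
  have eMP: "e i \<in> borel_measurable MP" if "i \<le> m" for i
    using that e0MP eiMP by (cases "i = 0") auto
  have XMP: "X i \<in> borel_measurable MP" if "i \<le> m" for i
    by (rule X_meas[where e=e and r=r and s=s and m=m]) (use X0MP eMP rec that in \<open>auto simp: spMP \<Omega>_def\<close>)
  have XM: "X i \<in> borel_measurable M" if "i \<le> m" for i
    by (rule X_meas[where e=e and r=r and s=s and m=m]) (use rec that in auto)
  have DMP: "{\<omega>\<in>space M. \<forall>i\<in>{1..m}. X i \<omega> \<le> x} \<in> sets MP"
    using Dm_meas[of m X MP x, OF XMP] by (simp add: spMP \<Omega>_def)
  have DM: "{\<omega>\<in>space M. \<forall>i\<in>{1..m}. X i \<omega> \<le> x} \<in> sets M"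
    using Dm_meas[of m X M x, OF XM] by simp
  have VMP: "(\<lambda>\<omega>. (X m \<omega>, e m \<omega>, indicator {\<omega>\<in>space M. \<forall>i\<in>{1..m}. X i \<omega> \<le> x} \<omega> :: real))
      \<in> measurable MP (borel \<Otimes>\<^sub>M (borel \<Otimes>\<^sub>M borel))"
    using XMP[of m] eMP[of m] DMP by (intro measurable_Pair borel_measurable_indicator) auto
  have VM: "(\<lambda>\<omega>. (X m \<omega>, e m \<omega>, indicator {\<omega>\<in>space M. \<forall>i\<in>{1..m}. X i \<omega> \<le> x} \<omega> :: real))
      \<in> measurable M (borel \<Otimes>\<^sub>M (borel \<Otimes>\<^sub>M borel))"
    using XM[of m] DM by (intro measurable_Pair borel_measurable_indicator) auto
  have embm: "(\<lambda>t::real. (t, 0::real, 0::real)) \<in> measurable borel (borel \<Otimes>\<^sub>M (borel \<Otimes>\<^sub>M borel))"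
    by measurable
  show ?thesis unfolding indep_var_eq
  proof (intro conjI)
    show "random_variable (borel \<Otimes>\<^sub>M (borel \<Otimes>\<^sub>M borel)) (\<lambda>\<omega>. (e (Suc m) \<omega>, 0::real, 0::real))"
      by measurable
    show "random_variable (borel \<Otimes>\<^sub>M (borel \<Otimes>\<^sub>M borel))
           (\<lambda>\<omega>. (X m \<omega>, e m \<omega>, indicator {\<omega>\<in>space M. \<forall>i\<in>{1..m}. X i \<omega> \<le> x} \<omega> :: real))"
      by (rule VM)
    show "indep_set
     (sigma_sets (space M) {(\<lambda>\<omega>. (X m \<omega>, e m \<omega>, indicator {\<omega>\<in>space M. \<forall>i\<in>{1..m}. X i \<omega> \<le> x} \<omega> :: real)) -` A \<inter> space M |A.
         A \<in> sets (borel \<Otimes>\<^sub>M (borel \<Otimes>\<^sub>M borel))})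
     (sigma_sets (space M) {(\<lambda>\<omega>. (e (Suc m) \<omega>, 0::real, 0::real)) -` A \<inter> space M |A. A \<in> sets (borel \<Otimes>\<^sub>M (borel \<Otimes>\<^sub>M borel))})"
    proof (rule indep_set_mono[OF indPC'])
      show "sigma_sets (space M) {(\<lambda>\<omega>. (X m \<omega>, e m \<omega>, indicator {\<omega>\<in>space M. \<forall>i\<in>{1..m}. X i \<omega> \<le> x} \<omega> :: real)) -` A \<inter> space M |A.
         A \<in> sets (borel \<Otimes>\<^sub>M (borel \<Otimes>\<^sub>M borel))} \<subseteq> sigma_sets \<Omega> P"
        unfolding \<Omega>_def[symmetric]
        by (rule sigma_sets_mono) (use measurable_sets[OF VMP] in \<open>auto simp: spMP setsMP \<Omega>_def\<close>)
      show "sigma_sets (space M) {(\<lambda>\<omega>. (e (Suc m) \<omega>, 0::real, 0::real)) -` A \<inter> space M |A. A \<in> sets (borel \<Otimes>\<^sub>M (borel \<Otimes>\<^sub>M borel))}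
          \<subseteq> sigma_sets \<Omega> C"
        unfolding \<Omega>_def[symmetric]
      proof (rule sigma_sets_mono', safe)
        fix A :: "(real \<times> real \<times> real) set" assume A: "A \<in> sets (borel \<Otimes>\<^sub>M (borel \<Otimes>\<^sub>M borel))"
        have "(\<lambda>t::real. (t, 0::real, 0::real)) -` A \<in> sets borel"
          using measurable_sets[OF embm A] by simp
        moreover have "(\<lambda>\<omega>. (e (Suc m) \<omega>, 0::real, 0::real)) -` A \<inter> \<Omega> = e (Suc m) -` ((\<lambda>t::real. (t, 0::real, 0::real)) -` A) \<inter> \<Omega>"
          by auto
        ultimately show "(\<lambda>\<omega>. (e (Suc m) \<omega>, 0::real, 0::real)) -` A \<inter> \<Omega> \<in> C"
          unfolding C_def by blast
      qed
    qed
  qed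
qed

theorem theorem2p1:
  fixes M :: "'a measure" and X e :: "nat \<Rightarrow> 'a \<Rightarrow> real"
    and F f :: "real \<Rightarrow> real" and r s x :: real
  assumes "prob_space M"
    and "r > 0"
    and "prob_space.indep_vars M (\<lambda>_. borel) e UNIV"
    and "\<And>i. distributed M lborel (e i) (\<lambda>t. ennreal (f t))"
    and "\<And>t. f t \<ge> 0"
    and "\<And>i t. F t = measure M {\<omega> \<in> space M. e i \<omega> \<le> t}"
    and "X 0 \<in> borel_measurable M"
    and "prob_space.indep_set M
           (sets (vimage_algebra (space M) (\<lambda>\<omega>. (X 0 \<omega>, e 0 \<omega>)) (borel \<Otimes>\<^sub>M borel)))
           (sets (vimage_algebra (space M) (\<lambda>\<omega>. restrict (\<lambda>i. e i \<omega>) {1..})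
                   (PiM {1..} (\<lambda>_. borel))))"
    and "\<And>i \<omega>. i \<ge> 1 \<Longrightarrow> \<omega> \<in> space M \<Longrightarrow>
           X i \<omega> - r * X (i - 1) \<omega> = e i \<omega> + s * e (i - 1) \<omega>"
    and "n \<ge> 1"
  shows "Gfun M X e x n y0 y1 = Kop r s f x (Gfun M X e x (n - 1)) y0 y1"
proof -
  interpret prob_space M by fact
  note rpos = assms(2)
  note rec = assms(9)
  obtain m where n: "n = Suc m" using assms(10) by (cases n) auto
  have em[measurable]: "e i \<in> borel_measurable M" for i
    using assms(3) unfolding indep_vars_def2 by auto
  have X0[measurable]: "X 0 \<in> borel_measurable M" by fact
  have XM[measurable]: "X i \<in> borel_measurable M" for i
    by (rule X_meas[where e=e and r=r and s=s and m=i]) (use rec X0 in auto)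
  have fmE: "(\<lambda>t. ennreal (f t)) \<in> borel_measurable borel"
    using assms(4)[of 0] by (simp add: distributed_def cong: measurable_cong_sets)
  have fm[measurable]: "f \<in> borel_measurable borel"
  proof -
    have "(\<lambda>t. enn2real (ennreal (f t))) \<in> borel_measurable borel" using fmE by measurable
    then show ?thesis using assms(5) by simp
  qed
  define Dm where "Dm = {\<omega>\<in>space M. \<forall>i\<in>{1..m}. X i \<omega> \<le> x}"
  have DM[measurable]: "Dm \<in> sets M" unfolding Dm_def by (rule Dm_meas) simp
  define k where "k = (\<lambda>z1 z0. if (min y0 x - s * z1 - y1) / r \<le> z0 then f (min y0 x - r * z0 - s * z1) else 0)"
  have k_nn: "k z1 z0 \<ge> 0" for z1 z0 using assms(5) by (simp add: k_def)
  have km[measurable]: "(\<lambda>p. k (snd p) (fst p)) \<in> borel_measurable (borel \<Otimes>\<^sub>M borel)"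
    unfolding k_def by measurable
  define Fz where "Fz = (\<lambda>z \<omega>. ennreal (indicator Dm \<omega>) * ennreal (k (e m \<omega>) z) * (if X m \<omega> \<le> z then 1 else 0))"
  have Fzm0: "case_prod Fz \<in> borel_measurable (borel \<Otimes>\<^sub>M M)"
    unfolding Fz_def k_def by measurable
  have Fzm[measurable]: "case_prod Fz \<in> borel_measurable (lborel \<Otimes>\<^sub>M M)"
    using Fzm0 by (subst measurable_cong_sets[OF sets_pair_measure_cong[OF sets_lborel refl] refl])
  define I where "I = (\<lambda>z. \<integral>\<^sup>+\<omega>. Fz z \<omega> \<partial>M)"
  have Im[measurable]: "I \<in> borel_measurable lborel"
    unfolding I_def by measurable
  define Ev where "Ev = {\<omega>\<in>space M. run_max X n \<omega> \<le> ereal x \<and> X n \<omega> \<le> y0 \<and> e n \<omega> \<le> y1}"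
  have EvM[measurable]: "Ev \<in> sets M"
  proof -
    have "Ev = {\<omega>\<in>space M. (\<forall>i\<in>{1..n}. X i \<omega> \<le> x) \<and> X n \<omega> \<le> y0 \<and> e n \<omega> \<le> y1}"
      unfolding Ev_def by (simp add: run_max_le)
    also have "\<dots> = {\<omega>\<in>space M. \<forall>i\<in>{1..n}. X i \<omega> \<le> x} \<inter> {\<omega>\<in>space M. X n \<omega> \<le> y0 \<and> e n \<omega> \<le> y1}"
      by auto
    also have "\<dots> \<in> sets M"
    proof (rule sets.Int)
      show "{\<omega>\<in>space M. \<forall>i\<in>{1..n}. X i \<omega> \<le> x} \<in> sets M" by (rule Dm_meas) simp
      show "{\<omega>\<in>space M. X n \<omega> \<le> y0 \<and> e n \<omega> \<le> y1} \<in> sets M" by measurable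
    qed
    finally show ?thesis .
  qed
  define V where "V = (\<lambda>\<omega>. (X m \<omega>, e m \<omega>, indicator Dm \<omega> :: real))"
  define emb where "emb = (\<lambda>t::real. (t, 0::real, 0::real))"
  define g where "g = (\<lambda>p::(real \<times> real \<times> real) \<times> (real \<times> real \<times> real).
     ennreal (snd (snd (fst p))) * (if fst (snd p) \<le> y1 \<and> fst (snd p) \<le> min y0 x - r * fst (fst p) - s * fst (snd (fst p)) then 1 else 0))"
  have gm: "g \<in> borel_measurable ((borel \<Otimes>\<^sub>M (borel \<Otimes>\<^sub>M borel)) \<Otimes>\<^sub>M (borel \<Otimes>\<^sub>M (borel \<Otimes>\<^sub>M borel)))"
    unfolding g_def by measurable
  have ind_pt: "indicator Ev \<omega> = g (V \<omega>, emb (e n \<omega>))" if "\<omega> \<in> space M" for \<omega>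
  proof -
    have Xn: "X n \<omega> = r * X m \<omega> + e n \<omega> + s * e m \<omega>"
      using rec[of n \<omega>] that n by simp
    have "{1..n} = insert n {1..m}" using n by auto
    then have "(\<forall>i\<in>{1..n}. X i \<omega> \<le> x) \<longleftrightarrow> \<omega> \<in> Dm \<and> X n \<omega> \<le> x"
      using that by (auto simp: Dm_def)
    then have "\<omega> \<in> Ev \<longleftrightarrow> \<omega> \<in> Dm \<and> e n \<omega> \<le> y1 \<and> e n \<omega> \<le> min y0 x - r * X m \<omega> - s * e m \<omega>"
      using that unfolding Ev_def by (auto simp: run_max_le Xn)
    then show ?thesis
      by (auto simp: g_def V_def emb_def indicator_def)
  qed
  have step12: "emeasure M Ev = (\<integral>\<^sup>+\<omega>. g (V \<omega>, emb (e n \<omega>)) \<partial>M)"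
  proof -
    have "(\<integral>\<^sup>+\<omega>. g (V \<omega>, emb (e n \<omega>)) \<partial>M) = (\<integral>\<^sup>+\<omega>. indicator Ev \<omega> \<partial>M)"
      by (rule nn_integral_cong) (simp add: ind_pt)
    also have "\<dots> = emeasure M Ev" by (rule nn_integral_indicator) (rule EvM)
    finally show ?thesis by simp
  qed
  have indV: "indep_var (borel \<Otimes>\<^sub>M (borel \<Otimes>\<^sub>M borel)) V (borel \<Otimes>\<^sub>M (borel \<Otimes>\<^sub>M borel)) (\<lambda>\<omega>. emb (e n \<omega>))"
    unfolding V_def emb_def Dm_def n
    by (rule indep_core[where r=r and s=s]) (use assms(3) assms(8) rec in auto)
  have step2: "(\<integral>\<^sup>+\<omega>. g (V \<omega>, emb (e n \<omega>)) \<partial>M) = (\<integral>\<^sup>+\<omega>. (\<integral>\<^sup>+t. ennreal (f t) * g (V \<omega>, emb t) \<partial>lborel) \<partial>M)"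
    by (rule indep_nn_integral[OF indV _ assms(4) gm]) (simp add: emb_def)
  have step3: "(\<integral>\<^sup>+t. ennreal (f t) * g (V \<omega>, emb t) \<partial>lborel) = ennreal r * (\<integral>\<^sup>+z. Fz z \<omega> \<partial>lborel)"
    for \<omega>
  proof -
    define b where "b = min y0 x - s * e m \<omega>"
    have "(\<integral>\<^sup>+t. ennreal (f t) * g (V \<omega>, emb t) \<partial>lborel)
       = (\<integral>\<^sup>+t. ennreal (indicator Dm \<omega>) * (ennreal (f t) * indicator {t. t \<le> y1 \<and> t \<le> b - r * X m \<omega>} t) \<partial>lborel)"
      by (intro nn_integral_cong) (auto simp: g_def V_def emb_def b_def indicator_def algebra_simps)
    also have "\<dots> = ennreal (indicator Dm \<omega>) * (\<integral>\<^sup>+t. ennreal (f t) * indicator {t. t \<le> y1 \<and> t \<le> b - r * X m \<omega>} t \<partial>lborel)"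
      by (rule nn_integral_cmult) measurable
    also have "\<dots> = ennreal (indicator Dm \<omega>) * (ennreal r * (\<integral>\<^sup>+ z. ennreal (if (b - y1) / r \<le> z then f (b - r * z) else 0) * indicator {X m \<omega>..} z \<partial>lborel))"
      by (simp add: affine_sub[OF fm rpos])
    also have "\<dots> = ennreal r * (\<integral>\<^sup>+ z. ennreal (indicator Dm \<omega>) * (ennreal (if (b - y1) / r \<le> z then f (b - r * z) else 0) * indicator {X m \<omega>..} z) \<partial>lborel)"
      by (subst nn_integral_cmult) (auto simp: ac_simps)
    also have "\<dots> = ennreal r * (\<integral>\<^sup>+z. Fz z \<omega> \<partial>lborel)"
      by (intro arg_cong2[where f="(*)"] refl nn_integral_cong)
         (auto simp: Fz_def k_def b_def indicator_def algebra_simps)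
    finally show ?thesis .
  qed
  interpret LM: pair_sigma_finite lborel M by unfold_locales
  have Fzm': "(\<lambda>\<omega>. \<integral>\<^sup>+z. Fz z \<omega> \<partial>lborel) \<in> borel_measurable M"
  proof -
    have "(\<lambda>(x, y). case_prod Fz (y, x)) \<in> borel_measurable (M \<Otimes>\<^sub>M lborel)"
      by (rule measurable_pair_swap[OF Fzm])
    then have "case_prod (\<lambda>\<omega> z. Fz z \<omega>) \<in> borel_measurable (M \<Otimes>\<^sub>M lborel)"
      by (simp add: case_prod_beta')
    then show ?thesis by (rule lborel.borel_measurable_nn_integral)
  qed
  have step4: "(\<integral>\<^sup>+\<omega>. ennreal r * (\<integral>\<^sup>+z. Fz z \<omega> \<partial>lborel) \<partial>M) = ennreal r * (\<integral>\<^sup>+z. I z \<partial>lborel)"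
  proof -
    have "(\<integral>\<^sup>+\<omega>. ennreal r * (\<integral>\<^sup>+z. Fz z \<omega> \<partial>lborel) \<partial>M) = ennreal r * (\<integral>\<^sup>+\<omega>. (\<integral>\<^sup>+z. Fz z \<omega> \<partial>lborel) \<partial>M)"
      by (rule nn_integral_cmult[OF Fzm'])
    also have "(\<integral>\<^sup>+\<omega>. (\<integral>\<^sup>+z. Fz z \<omega> \<partial>lborel) \<partial>M) = (\<integral>\<^sup>+z. I z \<partial>lborel)"
      unfolding I_def by (rule LM.Fubini'[OF Fzm])
    finally show ?thesis .
  qed
  have main_eq: "emeasure M Ev = ennreal r * (\<integral>\<^sup>+z. I z \<partial>lborel)"
    using step12 step2 step3 step4 by simp
  have step5: "I z = (\<integral>\<^sup>+z1. ennreal (k z1 z) \<partial>interval_measure (Gfun M X e x (n - 1) z))" for z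
  proof -
    define Sz where "Sz = {\<omega>\<in>space M. run_max X m \<omega> \<le> ereal x \<and> X m \<omega> \<le> z}"
    have Sz_eq: "Sz = Dm \<inter> {\<omega>\<in>space M. X m \<omega> \<le> z}"
      unfolding Sz_def Dm_def by (auto simp: run_max_le)
    have SzM[measurable]: "Sz \<in> sets M" unfolding Sz_eq by measurable
    define \<nu> where "\<nu> = distr (density M (indicator Sz)) borel (e m)"
    have emd: "e m \<in> measurable (density M (indicator Sz)) borel"
      by (subst measurable_cong_sets[OF sets_density refl]) simp
    have kz[measurable]: "(\<lambda>z1. ennreal (k z1 z)) \<in> borel_measurable borel"
      unfolding k_def by measurable
    have "I z = (\<integral>\<^sup>+\<omega>. indicator Sz \<omega> * ennreal (k (e m \<omega>) z) \<partial>M)"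
      unfolding I_def
      by (intro nn_integral_cong) (auto simp: Fz_def Sz_eq indicator_def)
    also have "\<dots> = (\<integral>\<^sup>+\<omega>. ennreal (k (e m \<omega>) z) \<partial>density M (indicator Sz))"
      by (subst nn_integral_density) auto
    also have "\<dots> = (\<integral>\<^sup>+z1. ennreal (k z1 z) \<partial>\<nu>)"
      unfolding \<nu>_def by (subst nn_integral_distr[OF emd]) auto
    also have "\<nu> = interval_measure (Gfun M X e x (n - 1) z)"
    proof -
      interpret fm: finite_measure "density M (indicator Sz)"
        by (rule finite_measure_restricted) simp
      have fb: "finite_borel_measure \<nu>"
        unfolding finite_borel_measure_def finite_borel_measure_axioms_def \<nu>_def
        by (auto intro: fm.finite_measure_distr[OF emd])
      have "cdf \<nu> = Gfun M X e x (n - 1) z"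
      proof
        fix t
        have "cdf \<nu> t = measure (density M (indicator Sz)) (e m -` {..t} \<inter> space (density M (indicator Sz)))"
          unfolding cdf_def \<nu>_def by (subst measure_distr[OF emd]) auto
        also have "\<dots> = measure M (Sz \<inter> (e m -` {..t} \<inter> space M))"
          by (subst measure_restricted) auto
        also have "Sz \<inter> (e m -` {..t} \<inter> space M) = {\<omega> \<in> space M. run_max X m \<omega> \<le> ereal x \<and> X m \<omega> \<le> z \<and> e m \<omega> \<le> t}"
          unfolding Sz_def by auto
        finally show "cdf \<nu> t = Gfun M X e x (n - 1) z t"
          by (simp add: Gfun_def n)
      qed
      then show ?thesis using interval_measure_cdf[OF fb] by simp
    qed
    finally show ?thesis .
  qed
  have step6: "Kop r s f x (Gfun M X e x (n - 1)) y0 y1 = r * (LINT z0|lborel. enn2real (I z0))"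
    unfolding Kop_def
  proof (intro arg_cong2[where f="(*)"] refl Bochner_Integration.integral_cong)
    fix z0
    have kz[measurable]: "(\<lambda>z1. k z1 z0) \<in> borel_measurable borel"
      unfolding k_def by measurable
    have "(LINT z1|interval_measure (Gfun M X e x (n - 1) z0). k z1 z0)
        = enn2real (\<integral>\<^sup>+z1. ennreal (k z1 z0) \<partial>interval_measure (Gfun M X e x (n - 1) z0))"
      by (rule integral_eq_nn_integral) (auto simp: k_nn cong: measurable_cong_sets)
    then show "(LINT z1|interval_measure (Gfun M X e x (n - 1) z0).
          (if (min y0 x - s * z1 - y1) / r \<le> z0 then f (min y0 x - r * z0 - s * z1) else 0))
        = enn2real (I z0)"
      by (simp add: step5 k_def)
  qed
  have fin: "(\<integral>\<^sup>+z. I z \<partial>lborel) \<noteq> \<infinity>"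
  proof
    assume "(\<integral>\<^sup>+z. I z \<partial>lborel) = \<infinity>"
    then have "emeasure M Ev = \<infinity>" using main_eq rpos by (simp add: ennreal_mult_top)
    then show False by (simp add: emeasure_eq_measure)
  qed
  have step7: "(LINT z0|lborel. enn2real (I z0)) = enn2real (\<integral>\<^sup>+z. I z \<partial>lborel)"
  proof -
    have "(LINT z0|lborel. enn2real (I z0)) = enn2real (\<integral>\<^sup>+z. ennreal (enn2real (I z)) \<partial>lborel)"
      by (rule integral_eq_nn_integral) auto
    also have "(\<integral>\<^sup>+z. ennreal (enn2real (I z)) \<partial>lborel) = (\<integral>\<^sup>+z. I z \<partial>lborel)"
    proof (rule nn_integral_cong_AE)
      show "AE z in lborel. ennreal (enn2real (I z)) = I z"
        using nn_integral_PInf_AE[OF Im fin] by eventually_elim (simp add: ennreal_enn2real_if)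
    qed
    finally show ?thesis .
  qed
  have "Gfun M X e x n y0 y1 = measure M Ev" by (simp add: Gfun_def Ev_def)
  also have "\<dots> = enn2real (emeasure M Ev)" by (simp add: measure_def)
  also have "\<dots> = r * enn2real (\<integral>\<^sup>+z. I z \<partial>lborel)"
    using rpos by (simp add: main_eq enn2real_mult)
  also have "\<dots> = Kop r s f x (Gfun M X e x (n - 1)) y0 y1"
    by (simp only: step6 step7)
  finally show ?thesis .
qed

end
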